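(* Let $d_m\ge1$, let $n,k$ be integers with $k\ge\ell(d_m)$ and $n\ge k+\ell(d_m)+2d_m$, let $n'=n-k-\ell(d_m)-2d_m$, and let $\mathcal C_2(n,k,1,d_m)=\{0^k\vec u1^{d_m}\vec c1^{d_m}:\vec c\in\mathcal C_H\}$, where $\mathcal C_H\subseteq\{0,1\}^{n'}$ is any code all of whose words are $(d_m,k)$-WWL vectors. Then $\mathcal C_2(n,k,1,d_m)$ is prefix synchronized with the set $H=\{0^k\vec u\}$ and index $\rho=d_m$.
   Context: Binary alphabet; juxtaposition is concatenation; $(\vec x)_i^j=(x_i,\dots,x_j)$; $d_H$ is Hamming distance. A vector of length $m$ is a $(d,k)$-WWL vector if $m<k$ or every window of $k$ consecutive entries has Hamming weight at least $d$. $\ell(d)=d\lceil\log_2 d\rceil+d$ and $\vec u=1^d\vec u_0\cdots\vec u_{\lceil\log_2 d\rceil-1}\in\{0,1\}^{\ell(d)}$, where $\vec u_i$ is the length-$d$ prefix of $(1^{2^i}0^{2^i})^d$; here $d=d_m$. A code $\mathcal C\subseteq\{0,1\}^n$ is prefix synchronized with a set $H\subseteq\{0,1\}^m$ ($m\le n$) and index $\rho$ if for all $\vec a\in\mathcal C$, $\vec h\in H$ and $i\in[2,n]$, $d_H((\vec a\vec h)_i^{i+m-1},\vec h)\ge\rho$. *)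

theory Defs
  imports Complex_Main
begin

text \<open>Binary vectors are bool lists (True = 1, False = 0). Positions are 1-indexed in the
paper; the window (x)_i^j is  take (j-i+1) (drop (i-1) x).\<close>

definition hweight :: "bool list \<Rightarrow> nat" where
  "hweight x = length (filter id x)"

definition hdist :: "bool list \<Rightarrow> bool list \<Rightarrow> nat" where
  "hdist x y = card {i. i < length x \<and> x ! i \<noteq> y ! i}"

definition window :: "bool list \<Rightarrow> nat \<Rightarrow> nat \<Rightarrow> bool list" where
  "window x i j = take (Suc j - i) (drop (i - 1) x)"

definition wwl :: "nat \<Rightarrow> nat \<Rightarrow> bool list \<Rightarrow> bool" where
  "wwl d k x \<longleftrightarrow> length x < k \<or>
     (\<forall>j. j + k \<le> length x \<longrightarrow> hweight (take k (drop j x)) \<ge> d)"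

definition clog2 :: "nat \<Rightarrow> nat" where
  "clog2 d = nat \<lceil>log 2 (real d)\<rceil>"

definition ell :: "nat \<Rightarrow> nat" where
  "ell d = d * clog2 d + d"

definition uvec_i :: "nat \<Rightarrow> nat \<Rightarrow> bool list" where
  "uvec_i d i = take d (concat (replicate d (replicate (2^i) True @ replicate (2^i) False)))"

definition uvec :: "nat \<Rightarrow> bool list" where
  "uvec d = replicate d True @ concat (map (uvec_i d) [0..<clog2 d])"

definition prefix_sync :: "nat \<Rightarrow> nat \<Rightarrow> bool list set \<Rightarrow> bool list set \<Rightarrow> nat \<Rightarrow> bool" where
  "prefix_sync n m C H \<rho> \<longleftrightarrow>
     m \<le> n \<and> (\<forall>a\<in>C. length a = n) \<and> (\<forall>h\<in>H. length h = m) \<and>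
     (\<forall>a\<in>C. \<forall>h\<in>H. \<forall>i\<in>{2..n}. hdist (window (a @ h) i (i + m - 1)) h \<ge> \<rho>)"

definition code2 :: "nat \<Rightarrow> nat \<Rightarrow> bool list set \<Rightarrow> bool list set" where
  "code2 k dm CH = (\<lambda>c. replicate k False @ uvec dm @ replicate dm True @ c @ replicate dm True) ` CH"

end

theory Submission
  imports Defs
begin


definition ub :: "nat \<Rightarrow> nat \<Rightarrow> bool" where "ub i y = (y mod 2^(Suc i) < 2^i)"

lemma concat_replicate_nth:
  "y < n * length xs \<Longrightarrow> concat (replicate n xs) ! y = xs ! (y mod length xs)"
proof (induction n arbitrary: y)
  case 0 then show ?case by simp
next
  case (Suc n)
  show ?case
  proof (cases "y < length xs")
    case True then show ?thesis by (simp add: nth_append)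
  next
    case False
    then have "y - length xs < n * length xs" using Suc.prems by auto
    then have "concat (replicate n xs) ! (y - length xs) = xs ! ((y - length xs) mod length xs)"
      using Suc.IH by blast
    moreover have "(y - length xs) mod length xs = y mod length xs"
      using False by (simp add: le_mod_geq)
    ultimately show ?thesis using False by (simp add: nth_append)
  qed
qed

lemma uvec_i_len: "length (uvec_i d i) = d"
proof -
  have "length (concat (replicate d (replicate (2^i) True @ replicate (2^i) False))) = d * (2*2^i)"
    by (simp add: length_concat sum_list_replicate)
  moreover have "d \<le> d * (2*2^i)" by simp
  ultimately show ?thesis unfolding uvec_i_def by simp
qed

lemma uvec_i_nth: assumes "y < d" shows "uvec_i d i ! y = ub i y"
proof -
  let ?P = "replicate (2^i) True @ replicate (2^i) False"
  have lp: "length ?P = 2^Suc i" by simp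
  have "(1::nat) \<le> 2^Suc i" by simp
  then have "d \<le> d * length ?P" using lp by (metis mult_le_mono2 nat_mult_1_right)
  then have "y < d * length ?P" using assms by linarith
  then have "concat (replicate d ?P) ! y = ?P ! (y mod 2^Suc i)"
    using concat_replicate_nth lp by metis
  moreover have "y mod 2^Suc i < 2^Suc i" by simp
  moreover have "?P ! a = (a < 2^i)" if "a < 2^Suc i" for a
    using that by (auto simp: nth_append)
  ultimately show ?thesis using assms unfolding uvec_i_def ub_def
    by simp
qed

lemma concat_map_len:
  "(\<And>i. i < L \<Longrightarrow> length (f i) = d) \<Longrightarrow> length (concat (map f [0..<L])) = d * L"
  by (induction L) auto

lemma concat_map_nth:
  "(\<And>i. i < L \<Longrightarrow> length (f i) = d) \<Longrightarrow> i < L \<Longrightarrow> y < d \<Longrightarrow>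
     concat (map f [0..<L]) ! (d*i + y) = f i ! y"
proof (induction L)
  case 0 then show ?case by simp
next
  case (Suc L)
  have len: "length (concat (map f [0..<L])) = d * L"
    using Suc.prems(1) by (intro concat_map_len) auto
  show ?case
  proof (cases "i < L")
    case True
    have "d*i + y < d * Suc i" using Suc.prems(3) by simp
    also have "\<dots> \<le> d * L" using True by (intro mult_le_mono2) simp
    finally have "d*i + y < d * L" .
    then show ?thesis using Suc True len by (simp add: nth_append)
  next
    case False
    then have "i = L" using Suc.prems by simp
    then show ?thesis using len Suc.prems by (simp add: nth_append)
  qed
qed



lemma uvec_len: "length (uvec d) = ell d"
  unfolding uvec_def ell_def
  by (simp add: concat_map_len[where d=d] uvec_i_len)

lemma uvec_nth_pre: "j < d \<Longrightarrow> uvec d ! j"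
  unfolding uvec_def by (simp add: nth_append)

lemma uvec_nth_blk: "i < clog2 d \<Longrightarrow> y < d \<Longrightarrow> uvec d ! (d + d*i + y) = ub i y"
  unfolding uvec_def
  by (simp add: nth_append concat_map_nth[where d=d] uvec_i_len uvec_i_nth)

lemma clog2_ge: assumes "d \<ge> 1" shows "d \<le> 2 ^ clog2 d"
proof -
  have "log 2 (real d) \<ge> 0" using assms by simp
  have "real d = 2 powr log 2 (real d)" using assms by simp
  also have "\<dots> \<le> 2 powr real (clog2 d)"
    unfolding clog2_def using \<open>log 2 (real d) \<ge> 0\<close>
    by (intro powr_mono) (auto simp: ceiling_le_iff le_of_int_ceiling)
  also have "\<dots> = 2 ^ clog2 d" by (simp add: powr_realpow)
  finally show ?thesis by (metis of_nat_le_iff of_nat_numeral of_nat_power)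
qed

lemma clog2_lt: assumes "d \<ge> 1" "i < clog2 d" shows "2 ^ i < d"
proof -
  have "real i < log 2 (real d)"
  proof -
    have "int i < \<lceil>log 2 (real d)\<rceil>" using assms(2) unfolding clog2_def by linarith
    then have "int i + 1 \<le> \<lceil>log 2 (real d)\<rceil>" by simp
    then show ?thesis by (metis ceiling_le_iff le_less not_less of_int_of_nat_eq ceiling_less_cancel
          less_ceiling_iff zle_add1_eq_le)
  qed
  then have "2 powr real i < 2 powr log 2 (real d)" by simp
  then have "2 powr real i < real d" using assms by simp
  then show ?thesis by (metis of_nat_less_iff of_nat_numeral of_nat_power powr_realpow zero_less_numeral)
qed

lemma lowbit: "(t::nat) > 0 \<Longrightarrow> \<exists>i q. t = 2^i * (2*q+1)"
proof (induction t rule: less_induct)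
  case (less t)
  show ?case
  proof (cases "even t")
    case True
    then obtain t' where t': "t = 2*t'" by blast
    then have "t' < t" "t' > 0" using less.prems by auto
    then obtain i q where "t' = 2^i*(2*q+1)" using less.IH by blast
    then have "t = 2^Suc i * (2*q+1)" using t' by simp
    then show ?thesis by blast
  next
    case False
    then obtain q where "t = 2*q+1" using oddE by blast
    then have "t = 2^0*(2*q+1)" by simp
    then show ?thesis by blast
  qed
qed

lemma ub_shift: assumes "t = 2^i * (2*q+1)" shows "ub i y \<noteq> ub i (y + t)"
proof -
  let ?P = "(2::nat)^i"
  have P2: "(2::nat)^Suc i = 2*?P" by simp
  have "y + t = (y + ?P) + 2*?P*q" using assms by (simp add: algebra_simps)
  then have e: "(y + t) mod (2*?P) = ((y + ?P) + (2*?P)*q) mod (2*?P)" by (rule arg_cong[where f="\<lambda>z. z mod (2*?P)"])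
  also have "\<dots> = (y + ?P) mod (2*?P)" by (rule mod_mult_self2)
  finally have e: "(y + t) mod (2*?P) = (y + ?P) mod (2*?P)" .
  define b where "b = y mod (2*?P)"
  have bl: "b < 2*?P" unfolding b_def by simp
  have "(y + ?P) mod (2*?P) = (b + ?P) mod (2*?P)" unfolding b_def by (simp add: mod_add_left_eq)
  show ?thesis
  proof (cases "b < ?P")
    case True
    then have "(b + ?P) mod (2*?P) = b + ?P" by simp
    then show ?thesis unfolding ub_def P2 using e True \<open>(y + ?P) mod (2*?P) = (b + ?P) mod (2*?P)\<close> b_def by simp
  next
    case False
    then have "(b + ?P) = (b - ?P) + 1*(2*?P)" by simp
    then have "(b + ?P) mod (2*?P) = (b - ?P) mod (2*?P)" by (metis mod_mult_self1)
    also have "\<dots> = b - ?P" using bl by simp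
    finally have "(b + ?P) mod (2*?P) = b - ?P" .
    moreover have "y mod (2*?P) - ?P < ?P" using bl unfolding b_def by linarith
    ultimately show ?thesis unfolding ub_def P2 using e False \<open>(y + ?P) mod (2*?P) = (b + ?P) mod (2*?P)\<close> b_def bl by simp
  qed
qed

lemma weight_aux: assumes "d \<ge> 1" "L \<le> clog2 d"
  shows "card {j. j < d + d*L \<and> uvec d ! j} \<ge> d + 2^L - 1"
  using assms(2)
proof (induction L)
  case 0
  have "{..<d} \<subseteq> {j. j < d + d*0 \<and> uvec d ! j}" by (auto simp: uvec_nth_pre)
  then have "card {..<d} \<le> card {j. j < d + d*0 \<and> uvec d ! j}" by (intro card_mono) auto
  then show ?case by simp
next
  case (Suc L)
  have iL: "L < clog2 d" using Suc.prems by simp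
  have pl: "2^L < d" using clog2_lt[OF assms(1) iL] .
  let ?A = "{j. j < d + d*L \<and> uvec d ! j}"
  let ?B = "(\<lambda>y. d + d*L + y) ` {..<2^L}"
  have "?B \<subseteq> {j. j < d + d*Suc L \<and> uvec d ! j}"
  proof
    fix j assume "j \<in> ?B"
    then obtain y where y: "y < 2^L" "j = d + d*L + y" by auto
    have "uvec d ! j = ub L y" using y pl iL by (simp add: uvec_nth_blk)
    moreover have "ub L y" unfolding ub_def using y by simp
    ultimately show "j \<in> {j. j < d + d*Suc L \<and> uvec d ! j}" using y pl by simp
  qed
  moreover have "?A \<subseteq> {j. j < d + d*Suc L \<and> uvec d ! j}" by auto
  ultimately have sub: "?A \<union> ?B \<subseteq> {j. j < d + d*Suc L \<and> uvec d ! j}" by blast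
  have disj: "?A \<inter> ?B = {}" by auto
  have cB: "card ?B = 2^L" by (simp add: card_image inj_on_def)
  have "card (?A \<union> ?B) = card ?A + card ?B" using disj by (intro card_Un_disjoint) auto
  also have "\<dots> \<ge> d + 2^L - 1 + 2^L" using Suc.IH Suc.prems cB by simp
  finally have calculation: "card (?A \<union> ?B) \<ge> d + 2^L - 1 + 2^L" .
  have "card {j. j < d + d*Suc L \<and> uvec d ! j} \<ge> d + 2^L - 1 + 2^L"
  proof -
    have "finite {j. j < d + d*Suc L \<and> uvec d ! j}" by simp
    from card_mono[OF this sub] show ?thesis using calculation by linarith
  qed
  moreover have "d + 2^L - 1 + 2^L = d + 2^Suc L - 1" by simp
  ultimately show ?case by simp
qed

lemma weight: assumes "d \<ge> 1" shows "card {j. j < ell d \<and> uvec d ! j} \<ge> 2*d - 1"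
proof -
  have "card {j. j < d + d*clog2 d \<and> uvec d ! j} \<ge> d + 2^clog2 d - 1"
    using weight_aux[OF assms] by simp
  moreover have "d + d*clog2 d = ell d" unfolding ell_def by simp
  ultimately show ?thesis using clog2_ge[OF assms] by simp
qed

lemma weight_from: assumes "d \<ge> 1"
  shows "card {j. j < ell d \<and> r \<le> j \<and> uvec d ! j} \<ge> 2*d - 1 - r"
proof -
  have "{j. j < ell d \<and> uvec d ! j} \<subseteq> {..<r} \<union> {j. j < ell d \<and> r \<le> j \<and> uvec d ! j}" by auto
  then have "card {j. j < ell d \<and> uvec d ! j} \<le> card ({..<r} \<union> {j. j < ell d \<and> r \<le> j \<and> uvec d ! j})"
    by (intro card_mono) auto
  also have "\<dots> \<le> r + card {j. j < ell d \<and> r \<le> j \<and> uvec d ! j}"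
    using card_Un_le[of "{..<r}"] by simp
  finally show ?thesis using weight[OF assms] by simp
qed



lemma two_sets: "finite M \<Longrightarrow> A \<subseteq> M \<Longrightarrow> B \<subseteq> M \<Longrightarrow> A \<inter> B = {} \<Longrightarrow> card A + card B \<le> card M"
  by (metis card_Un_disjoint card_mono infinite_super le_sup_iff)

context
  fixes d k n' :: nat and c :: "bool list"
  assumes d1: "d \<ge> 1" and kl: "ell d \<le> k" and lc: "length c = n'"
begin

definition "X = (replicate k False @ uvec d @ replicate d True @ c @ replicate d True) @ (replicate k False @ uvec d)"
definition "H = replicate k False @ uvec d"

lemma x0: "i < k \<Longrightarrow> \<not> X ! i"
  unfolding X_def by (simp add: nth_append_left nth_append_right)
lemma xu: "k \<le> i \<Longrightarrow> i < k + ell d \<Longrightarrow> X ! i = uvec d ! (i - k)"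
  unfolding X_def by (simp add: nth_append_left nth_append_right uvec_len)
lemma xB1: "k + ell d \<le> i \<Longrightarrow> i < k + ell d + d \<Longrightarrow> X ! i"
  unfolding X_def by (simp add: nth_append_left nth_append_right uvec_len)
lemma xc: "k + ell d + d \<le> i \<Longrightarrow> i < k + ell d + d + n' \<Longrightarrow> X ! i = c ! (i - (k + ell d + d))"
  unfolding X_def using lc by (simp add: nth_append_left nth_append_right uvec_len)
lemma xB2: "k + ell d + d + n' \<le> i \<Longrightarrow> i < k + ell d + 2*d + n' \<Longrightarrow> X ! i"
  unfolding X_def using lc by (simp add: nth_append_left nth_append_right uvec_len)
lemma xz: "k + ell d + 2*d + n' \<le> i \<Longrightarrow> i < k + ell d + 2*d + n' + k \<Longrightarrow> \<not> X ! i"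
  unfolding X_def using lc by (simp add: nth_append_left nth_append_right uvec_len)
lemma xh: "k + ell d + 2*d + n' + k \<le> i \<Longrightarrow> i < k + ell d + 2*d + n' + k + ell d \<Longrightarrow>
   X ! i = uvec d ! (i - (k + ell d + 2*d + n' + k))"
  unfolding X_def using lc by (simp add: nth_append_left nth_append_right uvec_len) (rule arg_cong[where f="(!) (uvec d)"], simp)
lemma h0: "j < k \<Longrightarrow> \<not> H ! j"
  unfolding H_def by (simp add: nth_append_left nth_append_right)
lemma hu: "k \<le> j \<Longrightarrow> H ! j = uvec d ! (j - k)"
  unfolding H_def by (simp add: nth_append_left nth_append_right)

lemma ell_eq: "ell d = d + d * clog2 d" unfolding ell_def by simp
lemma d_le_ell: "d \<le> ell d" unfolding ell_def by simp

definition "M s = {j. j < k + ell d \<and> X ! (s+j) \<noteq> H ! j}"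

lemma finM: "finite (M s)" unfolding M_def by simp

lemma caseC1: assumes s1: "1 \<le> s" and sd: "s < d" shows "d \<le> card (M s)"
proof -
  let ?L = "clog2 d"
  obtain i q where iq: "s = 2^i * (2*q+1)" using lowbit s1 by fastforce
  have "2^i \<le> s" using iq by simp
  also have "s < 2 ^ ?L" using sd clog2_ge[OF d1] by simp
  finally have "(2::nat)^i < 2 ^ ?L" .
  then have iL: "i < ?L" using power_less_imp_less_exp[of "2::nat" i ?L] by simp
  have "d * Suc i \<le> d * ?L" using iL by (intro mult_le_mono2) simp
  then have le: "d + d*i + d \<le> ell d" unfolding ell_eq by simp
  let ?A = "{k-s..<k}"
  let ?B = "(\<lambda>y. k+d+d*i+y) ` {..<d-s}"
  have A: "?A \<subseteq> M s"
  proof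
    fix j assume j: "j \<in> ?A"
    have "X ! (s+j) = uvec d ! (s + j - k)" using j sd d_le_ell by (intro xu) auto
    moreover have "uvec d ! (s + j - k)" using j sd by (intro uvec_nth_pre) auto
    moreover have "\<not> H ! j" using j by (intro h0) auto
    ultimately show "j \<in> M s" unfolding M_def using j by auto
  qed
  have B: "?B \<subseteq> M s"
  proof
    fix j assume "j \<in> ?B"
    then obtain y where y: "y < d - s" "j = k+d+d*i+y" by auto
    have jl: "j < k + ell d" using y le by simp
    have "X ! (s+j) = uvec d ! (s + j - k)" using y le by (intro xu) auto
    also have "s + j - k = d + d*i + (y + s)" using y by simp
    also have "uvec d ! \<dots> = ub i (y + s)" using iL y by (intro uvec_nth_blk) auto
    finally have 1: "X ! (s+j) = ub i (y + s)" .
    have "H ! j = uvec d ! (d + d*i + y)" using y by (simp add: hu add.assoc)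
    also have "\<dots> = ub i y" using iL y by (intro uvec_nth_blk) auto
    finally have 2: "H ! j = ub i y" .
    show "j \<in> M s" unfolding M_def using jl 1 2 ub_shift[OF iq, of y] by auto
  qed
  have disj: "?A \<inter> ?B = {}" by auto
  have "card ?A + card ?B \<le> card (M s)" by (rule two_sets[OF finM A B disj])
  moreover have "card ?B = d - s" by (simp add: card_image inj_on_def)
  moreover have "card ?A = s" using sd d_le_ell kl by simp
  ultimately show ?thesis using sd by simp
qed

lemma caseC2: assumes "d \<le> s" "s \<le> k" shows "d \<le> card (M s)"
proof -
  let ?A = "{k-s..<k-s+d}"
  have A: "?A \<subseteq> M s"
  proof
    fix j assume j: "j \<in> ?A"
    have "X ! (s+j) = uvec d ! (s + j - k)" using j assms d_le_ell by (intro xu) auto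
    moreover have "uvec d ! (s + j - k)" using j assms by (intro uvec_nth_pre) auto
    moreover have "\<not> H ! j" using j assms by (intro h0) auto
    ultimately show "j \<in> M s" unfolding M_def using j assms by auto
  qed
  show ?thesis using card_mono[OF finM A] by simp
qed

lemma caseC3: assumes "k < s" "s < k + ell d" shows "d \<le> card (M s)"
proof -
  define t where "t = s - k"
  have t: "s = k + t" "1 \<le> t" "t < ell d" using assms unfolding t_def by auto
  show ?thesis
  proof (cases "t < d")
    case True
    let ?A = "{..<d-t}"
    let ?B = "{ell d - t..<ell d}"
    have A: "?A \<subseteq> M s"
    proof
      fix j assume j: "j \<in> ?A"
      have "X ! (s+j) = uvec d ! (s + j - k)" using j t True d_le_ell by (intro xu) auto
      moreover have "uvec d ! (s + j - k)" using j t by (intro uvec_nth_pre) auto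
      moreover have "\<not> H ! j" using j True d_le_ell kl by (intro h0) auto
      ultimately show "j \<in> M s" unfolding M_def using j True d_le_ell kl by auto
    qed
    have B: "?B \<subseteq> M s"
    proof
      fix j assume j: "j \<in> ?B"
      have "X ! (s+j)" using j t True by (intro xB1) auto
      moreover have "\<not> H ! j" using j kl by (intro h0) auto
      ultimately show "j \<in> M s" unfolding M_def using j kl by auto
    qed
    have disj: "?A \<inter> ?B = {}" using d_le_ell by auto
    have "card ?A + card ?B \<le> card (M s)" by (rule two_sets[OF finM A B disj])
    then show ?thesis using True t by simp
  next
    case False
    let ?B = "{ell d - t..<ell d - t + d}"
    have B: "?B \<subseteq> M s"
    proof
      fix j assume j: "j \<in> ?B"
      have "X ! (s+j)" using j t False by (intro xB1) auto
      moreover have "\<not> H ! j" using j kl t False by (intro h0) auto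
      ultimately show "j \<in> M s" unfolding M_def using j kl t False by auto
    qed
    show ?thesis using card_mono[OF finM B] by simp
  qed
qed

lemma caseB2: assumes "k + ell d \<le> s" "s + d \<le> k + ell d + 2*d + n'" "k + ell d + 2*d + n' \<le> s + k"
  shows "d \<le> card (M s)"
proof -
  let ?N = "k + ell d + 2*d + n'"
  let ?A = "{?N-d-s..<?N-s}"
  have A: "?A \<subseteq> M s"
  proof
    fix j assume j: "j \<in> ?A"
    have "X ! (s+j)" using j assms by (intro xB2) auto
    moreover have "\<not> H ! j" using j assms by (intro h0) auto
    ultimately show "j \<in> M s" unfolding M_def using j assms by auto
  qed
  show ?thesis using card_mono[OF finM A] assms by simp
qed

lemma caseC5: assumes "k + ell d + 2*d + n' < s + d" "s < k + ell d + 2*d + n'"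
  shows "d \<le> card (M s)"
proof -
  let ?N = "k + ell d + 2*d + n'"
  let ?L = "clog2 d"
  define t where "t = ?N - s"
  have t: "s = ?N - t" "1 \<le> t" "t < d" using assms unfolding t_def by auto
  obtain i q where iq: "t = 2^i * (2*q+1)" using lowbit t by fastforce
  have "2^i \<le> t" using iq by simp
  also have "t < 2 ^ ?L" using t clog2_ge[OF d1] by simp
  finally have "(2::nat)^i < 2 ^ ?L" .
  then have iL: "i < ?L" using power_less_imp_less_exp[of "2::nat" i ?L] by simp
  have "d * Suc i \<le> d * ?L" using iL by (intro mult_le_mono2) simp
  then have le: "d + d*i + d \<le> ell d" unfolding ell_eq by simp
  let ?A = "{..<t}"
  let ?B = "(\<lambda>y. k+d+d*i+t+y) ` {..<d-t}"
  have A: "?A \<subseteq> M s"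
  proof
    fix j assume j: "j \<in> ?A"
    have "X ! (s+j)" using j t assms by (intro xB2) auto
    moreover have "\<not> H ! j" using j t d_le_ell kl by (intro h0) auto
    ultimately show "j \<in> M s" unfolding M_def using j t d_le_ell kl by auto
  qed
  have B: "?B \<subseteq> M s"
  proof
    fix j assume "j \<in> ?B"
    then obtain y where y: "y < d - t" "j = k+d+d*i+t+y" by auto
    have jl: "j < k + ell d" using y le by simp
    have sj: "s + j = ?N + k + (d + d*i + y)" using y t assms by simp
    have "X ! (s+j) = uvec d ! (d + d*i + y)" unfolding sj using y le
      by (subst xh) (auto simp: add.assoc)
    also have "\<dots> = ub i y" using iL y by (intro uvec_nth_blk) auto
    finally have 1: "X ! (s+j) = ub i y" .
    have "H ! j = uvec d ! (d + d*i + (y + t))" using y by (simp add: hu algebra_simps)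
    also have "\<dots> = ub i (y + t)" using iL y by (intro uvec_nth_blk) auto
    finally have 2: "H ! j = ub i (y + t)" .
    show "j \<in> M s" unfolding M_def using jl 1 2 ub_shift[OF iq, of y] by auto
  qed
  have disj: "?A \<inter> ?B = {}" using t by auto
  have "card ?A + card ?B \<le> card (M s)" by (rule two_sets[OF finM A B disj])
  moreover have "card ?B = d - t" by (simp add: card_image inj_on_def)
  ultimately show ?thesis using t by simp
qed

lemma Uset: assumes "s + k \<le> k + ell d + 2*d + n'"
  shows "2*d - 1 - (k + ell d + 2*d + n' - (s + k)) \<le>
     card ((\<lambda>j'. k + j') ` {j'. j' < ell d \<and> k + ell d + 2*d + n' - (s + k) \<le> j' \<and> uvec d ! j'})"
    and "(\<lambda>j'. k + j') ` {j'. j' < ell d \<and> k + ell d + 2*d + n' - (s + k) \<le> j' \<and> uvec d ! j'} \<subseteq> M s"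
proof -
  let ?N = "k + ell d + 2*d + n'"
  let ?S = "{j'. j' < ell d \<and> ?N - (s + k) \<le> j' \<and> uvec d ! j'}"
  have "card ((\<lambda>j'. k + j') ` ?S) = card ?S" by (simp add: card_image inj_on_def)
  then show "2*d - 1 - (?N - (s + k)) \<le> card ((\<lambda>j'. k + j') ` ?S)"
    using weight_from[OF d1, of "?N - (s + k)"] by simp
  show "(\<lambda>j'. k + j') ` ?S \<subseteq> M s"
  proof
    fix j assume "j \<in> (\<lambda>j'. k + j') ` ?S"
    then obtain j' where j': "j' < ell d" "?N - (s + k) \<le> j'" "uvec d ! j'" "j = k + j'" by auto
    have "\<not> X ! (s + j)" using j' assms kl by (intro xz) auto
    moreover have "H ! j" using j' by (simp add: hu)
    ultimately show "j \<in> M s" unfolding M_def using j' by auto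
  qed
qed

lemma caseW1: assumes "k + ell d + 2*d + n' < s + k + d" "s + k < k + ell d + 2*d + n'"
  shows "d \<le> card (M s)"
proof -
  have "2*d - 1 - (k + ell d + 2*d + n' - (s + k)) \<ge> d" using assms by simp
  then show ?thesis using Uset[of s] assms card_mono[OF finM Uset(2)[of s]] by linarith
qed

lemma caseW2: assumes "n' < k" "k + ell d \<le> s" "s < k + ell d + d" "s + k + d \<le> k + ell d + 2*d + n'"
  shows "d \<le> card (M s)"
proof -
  let ?N = "k + ell d + 2*d + n'"
  define p where "p = s - (k + ell d)"
  have p: "s = k + ell d + p" "p < d" using assms unfolding p_def by auto
  let ?A = "{..<d-p}"
  let ?B = "(\<lambda>j'. k + j') ` {j'. j' < ell d \<and> ?N - (s + k) \<le> j' \<and> uvec d ! j'}"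
  have A: "?A \<subseteq> M s"
  proof
    fix j assume j: "j \<in> ?A"
    have "X ! (s+j)" using j p by (intro xB1) auto
    moreover have "\<not> H ! j" using j p d_le_ell kl by (intro h0) auto
    ultimately show "j \<in> M s" unfolding M_def using j p d_le_ell kl by auto
  qed
  have disj: "?A \<inter> ?B = {}" using p d_le_ell kl by auto
  have "card ?A + card ?B \<le> card (M s)" by (rule two_sets[OF finM A Uset(2) disj]) (use assms in simp)
  moreover have "2*d - 1 - (?N - (s + k)) \<le> card ?B" using Uset(1)[of s] assms by simp
  moreover have "card ?A = d - p" by simp
  ultimately show ?thesis using p assms by linarith
qed

lemma wwl_card: assumes "wwl d k c" "j0 + k \<le> length c" shows "d \<le> card {y. y < k \<and> c ! (j0 + y)}"
proof -
  have "\<not> length c < k" using assms by simp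
  then have "hweight (take k (drop j0 c)) \<ge> d" using assms unfolding wwl_def by auto
  moreover have "hweight (take k (drop j0 c)) = card {y. y < k \<and> c ! (j0 + y)}"
    unfolding hweight_def length_filter_conv_card using assms by (intro arg_cong[where f=card]) auto
  ultimately show ?thesis by simp
qed

lemma caseWW1: assumes w: "wwl d k c" and "k \<le> n'" "k + ell d \<le> s" "s < k + ell d + d" "s + k + d \<le> k + ell d + 2*d + n'"
  shows "d \<le> card (M s)"
proof -
  define p where "p = s - (k + ell d)"
  have p: "s = k + ell d + p" "p < d" using assms unfolding p_def by auto
  have dk: "d \<le> k" using d_le_ell kl by simp
  let ?A = "{..<d-p}"
  let ?B = "(\<lambda>y. d - p + y) ` {y. y < k - d + p \<and> c ! y}"
  have A: "?A \<subseteq> M s"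
  proof
    fix j assume j: "j \<in> ?A"
    have "X ! (s+j)" using j p by (intro xB1) auto
    moreover have "\<not> H ! j" using j p dk by (intro h0) auto
    ultimately show "j \<in> M s" unfolding M_def using j p dk by auto
  qed
  have B: "?B \<subseteq> M s"
  proof
    fix j assume "j \<in> ?B"
    then obtain y where y: "y < k - d + p" "c ! y" "j = d - p + y" by auto
    have "X ! (s+j) = c ! y" using y p dk assms by (subst xc) auto
    moreover have "\<not> H ! j" using y p dk by (intro h0) auto
    ultimately show "j \<in> M s" unfolding M_def using y p dk by auto
  qed
  have disj: "?A \<inter> ?B = {}" by auto
  have "card ?A + card ?B \<le> card (M s)" by (rule two_sets[OF finM A B disj])
  moreover have "card ?B = card {y. y < k - d + p \<and> c ! y}" by (simp add: card_image inj_on_def)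
  moreover have "p \<le> card {y. y < k - d + p \<and> c ! y}"
  proof -
    have "d \<le> card {y. y < k \<and> c ! (0 + y)}" using wwl_card[OF w, of 0] lc assms by simp
    also have "{y. y < k \<and> c ! (0 + y)} \<subseteq> {y. y < k - d + p \<and> c ! y} \<union> {k - d + p..<k}" by auto
    then have "card {y. y < k \<and> c ! (0 + y)} \<le> card ({y. y < k - d + p \<and> c ! y} \<union> {k - d + p..<k})"
      by (intro card_mono) auto
    also have "\<dots> \<le> card {y. y < k - d + p \<and> c ! y} + card {k - d + p..<k}" by (rule card_Un_le)
    finally show ?thesis using p dk by simp
  qed
  ultimately show ?thesis using p by simp
qed

lemma caseWW2: assumes w: "wwl d k c" and "k + ell d + d \<le> s" "s + k + d \<le> k + ell d + 2*d + n'"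
  shows "d \<le> card (M s)"
proof -
  define j0 where "j0 = s - (k + ell d + d)"
  have j0: "s = k + ell d + d + j0" "j0 + k \<le> n'" using assms unfolding j0_def by auto
  let ?A = "{y. y < k \<and> c ! (j0 + y)}"
  have A: "?A \<subseteq> M s"
  proof
    fix j assume j: "j \<in> ?A"
    have "X ! (s+j) = c ! (j0 + j)" using j j0 by (subst xc) auto
    moreover have "\<not> H ! j" using j by (intro h0) auto
    ultimately show "j \<in> M s" unfolding M_def using j by auto
  qed
  show ?thesis using card_mono[OF finM A] wwl_card[OF w, of j0] j0 lc by simp
qed

lemma main_card: assumes w: "wwl d k c" and "1 \<le> s" "s < k + ell d + 2*d + n'"
  shows "d \<le> card (M s)"
proof -
  consider "s < d" | "d \<le> s \<and> s \<le> k" | "k < s \<and> s < k + ell d"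
    | "k + ell d \<le> s \<and> k + ell d + 2*d + n' < s + d"
    | "k + ell d \<le> s \<and> s + d \<le> k + ell d + 2*d + n' \<and> k + ell d + 2*d + n' \<le> s + k"
    | "k + ell d + 2*d + n' < s + k + d \<and> s + k < k + ell d + 2*d + n'"
    | "k + ell d \<le> s \<and> s + k + d \<le> k + ell d + 2*d + n' \<and> n' < k"
    | "k + ell d \<le> s \<and> s < k + ell d + d \<and> s + k + d \<le> k + ell d + 2*d + n' \<and> k \<le> n'"
    | "k + ell d + d \<le> s \<and> s + k + d \<le> k + ell d + 2*d + n'"
    by linarith
  then show ?thesis
  proof cases
    case 1 then show ?thesis using caseC1 assms by simp
  next
    case 2 then show ?thesis using caseC2 by simp
  next
    case 3 then show ?thesis using caseC3 by simp
  next
    case 4 then show ?thesis using caseC5 assms by simp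
  next
    case 5 then show ?thesis using caseB2 by simp
  next
    case 6 then show ?thesis using caseW1 by simp
  next
    case 7 then show ?thesis using caseW2 d_le_ell kl by simp
  next
    case 8 then show ?thesis using caseWW1 w by simp
  next
    case 9 then show ?thesis using caseWW2 w by simp
  qed
qed

end


lemma main_card':
  assumes "d \<ge> 1" "ell d \<le> k" "length c = n'" "wwl d k c" "1 \<le> s" "s < k + ell d + 2*d + n'"
  shows "d \<le> card {j. j < k + ell d \<and> ((replicate k False @ uvec d @ replicate d True @ c @ replicate d True) @ (replicate k False @ uvec d)) ! (s+j) \<noteq> (replicate k False @ uvec d) ! j}"
  using main_card[OF assms] by (simp add: M_def[OF assms(1-3)] X_def[OF assms(1-3)] H_def[OF assms(1-3)])

theorem theorem9:
  fixes dm n k :: nat and CH :: "bool list set"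
  assumes "dm \<ge> 1"
    and "k \<ge> ell dm"
    and "n \<ge> k + ell dm + 2 * dm"
    and "\<forall>c\<in>CH. length c = n - k - ell dm - 2 * dm"
    and "\<forall>c\<in>CH. wwl dm k c"
  shows "prefix_sync n (k + ell dm) (code2 k dm CH) {replicate k False @ uvec dm} dm"
proof -
  let ?m = "k + ell dm"
  let ?n' = "n - k - ell dm - 2*dm"
  have nN: "n = k + ell dm + 2*dm + ?n'" using assms(3) by simp
  show ?thesis
    unfolding prefix_sync_def
  proof (intro conjI ballI)
    show "?m \<le> n" using assms(3) by simp
  next
    fix a assume "a \<in> code2 k dm CH"
    then obtain c where c: "c \<in> CH" "a = replicate k False @ uvec dm @ replicate dm True @ c @ replicate dm True"
      unfolding code2_def by auto
    show "length a = n" using c assms(4) nN by (simp add: uvec_len)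
  next
    fix h assume "h \<in> {replicate k False @ uvec dm}"
    then show "length h = ?m" by (simp add: uvec_len)
  next
    fix a h i assume a: "a \<in> code2 k dm CH" and h: "h \<in> {replicate k False @ uvec dm}" and i: "i \<in> {2..n}"
    then obtain c where c: "c \<in> CH" "a = replicate k False @ uvec dm @ replicate dm True @ c @ replicate dm True"
      unfolding code2_def by auto
    have lc: "length c = ?n'" using c assms(4) by simp
    have la: "length a = n" using c lc nN by (simp add: uvec_len)
    have lh: "length h = ?m" using h by (simp add: uvec_len)
    have w: "window (a @ h) i (i + ?m - 1) = take ?m (drop (i - 1) (a @ h))"
      unfolding window_def using i by (simp add: Suc_diff_le)
    have "hdist (window (a @ h) i (i + ?m - 1)) h =
        card {j. j < ?m \<and> (a @ h) ! (i - 1 + j) \<noteq> h ! j}"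
    proof -
      have len: "length (take ?m (drop (i-1) (a@h))) = ?m" using la lh i by simp
      have nth: "\<And>j. j < ?m \<Longrightarrow> take ?m (drop (i-1) (a@h)) ! j = (a@h) ! (i-1+j)"
      proof -
        fix j assume "j < ?m"
        then have "take ?m (drop (i-1) (a@h)) ! j = drop (i-1) (a@h) ! j" by (rule nth_take)
        also have "\<dots> = (a@h) ! (i-1+j)" using la lh i by (intro nth_drop) auto
        finally show "take ?m (drop (i-1) (a@h)) ! j = (a@h) ! (i-1+j)" .
      qed
      show ?thesis unfolding w hdist_def len
        by (intro arg_cong[where f=card] Collect_cong) (use nth in fastforce)
    qed
    moreover have "dm \<le> card {j. j < ?m \<and> (a @ h) ! (i - 1 + j) \<noteq> h ! j}"
      using main_card'[OF assms(1,2) lc, of "i - 1"] assms(5) c h i nN by auto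
    ultimately show "dm \<le> hdist (window (a @ h) i (i + ?m - 1)) h" by simp
  qed
qed

end
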